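(* Let $k\ge 2$, $n=2k$, $\mathcal{N}=\{0,1,\dots,n-1\}$, and let $A,B,C$ be the sets of elements of $\mathcal{N}$ congruent to $0,1,2 \pmod 3$ respectively. Let $j\in\{0,1,2\}$ with $\sum_{t\in\mathcal{N}}t\equiv j\pmod 3$. Let $X$ be a $(k-1)$-subset of $\mathcal{N}$ with $A\not\subset X$, $B\not\subset X$ and $C\not\subset X$. Then $X\in\mathcal{D}(\mathcal{R}_i)$ for every $i\in\{0,1,2\}$ with $i\equiv 1-j\pmod 3$ or $i\equiv 2-j\pmod 3$; that is, for each such $i$ there exist $X',Y'\in\mathcal{R}_i$ with $X=X'\setminus Y'$.
   Context: For $i\in\{0,1,2\}$, $\mathcal{R}_i=\{\{x_1,\dots,x_k\}\in\binom{\mathcal{N}}{k} : x_1+\dots+x_k\equiv i \pmod 3\}$, where $\binom{\mathcal{N}}{k}$ is the family of $k$-element subsets of $\mathcal{N}$. For a family $\mathcal{F}$, $\mathcal{D}(\mathcal{F})=\{F\setminus F' : F,F'\in\mathcal{F}\}$. *)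

theory Defs
  imports Main
begin

definition R :: "nat set \<Rightarrow> nat \<Rightarrow> nat \<Rightarrow> nat set set" where
  "R N k i = {S. S \<subseteq> N \<and> card S = k \<and> \<Sum>S mod 3 = i}"

definition D :: "'a set set \<Rightarrow> 'a set set" where
  "D F = {S - S' | S S'. S \<in> F \<and> S' \<in> F}"

end

theory Submission
  imports Defs
begin

lemma mod3_ne: assumes "i \<le> 2" "j \<le> 2" "(int i - (1 - int j)) mod 3 = 0 \<or> (int i - (2 - int j)) mod 3 = 0"
  shows "(i + 3 - s mod 3) mod 3 \<noteq> (j + 6 - s mod 3 - i) mod 3"
proof -
    have "s mod 3 < 3" by simp
    then have "s mod 3 \<in> {0,1,2}" by auto
    moreover have "i \<in> {0,1,2}" "j \<in> {0,1,2}" using assms by auto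
    ultimately show ?thesis using assms(3) by auto
qed
lemma three: "(u::nat) < 3 \<Longrightarrow> u = 0 \<or> u = 1 \<or> u = 2" by arith
lemma core2: "(u::nat) < 3 \<Longrightarrow> (v::nat) < 3 \<Longrightarrow> (i::nat) < 3 \<Longrightarrow> (j::nat) < 3 \<Longrightarrow> (u + (j + 6 - v - i) mod 3 + v) mod 3 = j \<Longrightarrow> u = i"
  apply (drule three)+
  apply (elim disjE)
  apply simp_all
  done
lemma core1: "(v::nat) < 3 \<Longrightarrow> (i::nat) < 3 \<Longrightarrow> (v + (i + 3 - v) mod 3) mod 3 = i"
  apply (drule three)+
  apply (elim disjE)
  apply simp_all
  done
lemma t1: "((y::nat) mod 3 + b mod 3 + s mod 3) mod 3 = (y + b + s) mod 3"
proof -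
  have "(y + b + s) mod 3 = ((y+b) mod 3 + s mod 3) mod 3" by (rule mod_add_eq[symmetric])
  also have "\<dots> = ((y mod 3 + b mod 3) mod 3 + s mod 3) mod 3" by (simp only: mod_add_eq)
  also have "\<dots> = (y mod 3 + b mod 3 + s mod 3) mod 3" by (rule mod_add_left_eq)
  finally show ?thesis by (rule sym)
qed
lemma t2: "((s::nat) mod 3 + a mod 3) mod 3 = (s + a) mod 3"
  by (rule mod_add_eq)
lemma mod3_m2: assumes "(y::nat) + b + s = T" "T mod 3 = j" "b mod 3 = (j + 6 - s mod 3 - i) mod 3" "i \<le> 2" "j \<le> 2" shows "y mod 3 = i"
proof -
  have e: "(y mod 3 + b mod 3 + s mod 3) mod 3 = j" by (simp only: t1 assms(1) assms(2))
  then have "(y mod 3 + (j + 6 - s mod 3 - i) mod 3 + s mod 3) mod 3 = j" by (simp only: assms(3))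
  moreover have "y mod 3 < 3" "s mod 3 < 3" "i < 3" "j < 3" using assms(4,5) by auto
  ultimately show ?thesis using core2 by blast
qed
lemma mod3_m1: assumes "(x::nat) = s + a" "a mod 3 = (i + 3 - s mod 3) mod 3" "i \<le> 2" shows "x mod 3 = i"
proof -
  have e: "x mod 3 = (s mod 3 + a mod 3) mod 3" by (simp only: t2 assms(1))
  also have "\<dots> = (s mod 3 + (i + 3 - s mod 3) mod 3) mod 3" by (simp only: assms(2))
  also have "\<dots> = i" by (rule core1) (use assms(3) in auto)
  finally show ?thesis .
qed

theorem lemma2p1:
  fixes k n j :: nat and X :: "nat set"
  assumes "k \<ge> 2" and "n = 2 * k"
    and "j \<in> {0,1,2}" and "(\<Sum>t\<in>{0..<n}. t) mod 3 = j"
    and "X \<subseteq> {0..<n}" and "card X = k - 1"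
    and "\<not> {t\<in>{0..<n}. t mod 3 = 0} \<subseteq> X"
    and "\<not> {t\<in>{0..<n}. t mod 3 = 1} \<subseteq> X"
    and "\<not> {t\<in>{0..<n}. t mod 3 = 2} \<subseteq> X"
  shows "\<forall>i\<in>{0,1,2}. ((int i - (1 - int j)) mod 3 = 0 \<or> (int i - (2 - int j)) mod 3 = 0)
           \<longrightarrow> X \<in> D (R {0..<n} k i) \<and>
               (\<exists>X' Y'. X' \<in> R {0..<n} k i \<and> Y' \<in> R {0..<n} k i \<and> X = X' - Y')"
proof (intro ballI impI)
  fix i :: nat
  assume i: "i \<in> {0,1,2}"
    and c: "(int i - (1 - int j)) mod 3 = 0 \<or> (int i - (2 - int j)) mod 3 = 0"
  let ?N = "{0..<n}"
  have ex: "\<exists>a\<in>?N. a \<notin> X \<and> a mod 3 = r" if "r < 3" for r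
  proof -
    have g: "\<exists>a\<in>?N. a \<notin> X \<and> a mod 3 = q" if "\<not> {t\<in>?N. t mod 3 = q} \<subseteq> X" for q
      using that by blast
    have "r = 0 \<or> r = 1 \<or> r = 2" using that by auto
    then show ?thesis using g[OF assms(7)] g[OF assms(8)] g[OF assms(9)] by blast
  qed
  define s where "s = \<Sum>X"
  define T where "T = (\<Sum>t\<in>?N. t)"
  define ra where "ra = (i + 3 - s mod 3) mod 3"
  define rb where "rb = (j + 6 - s mod 3 - i) mod 3"
  obtain a where a: "a \<in> ?N" "a \<notin> X" "a mod 3 = ra"
    using ex[of ra] unfolding ra_def by auto
  obtain b where b: "b \<in> ?N" "b \<notin> X" "b mod 3 = rb"
    using ex[of rb] unfolding rb_def by auto
  have ij: "i \<le> 2" "j \<le> 2" using i assms(3) by auto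
  have "ra \<noteq> rb" unfolding ra_def rb_def using mod3_ne[OF ij c] .
  then have ab: "a \<noteq> b" using a b by auto
  have fX: "finite X" using assms(5) finite_subset by blast
  define X' where "X' = insert a X"
  define Y' where "Y' = (?N - X) - {b}"
  have sX': "\<Sum>X' = s + a" unfolding X'_def s_def using fX a by simp
  have cX': "card X' = k" unfolding X'_def using fX a assms(1,6) by simp
  have cNX: "card (?N - X) = k + 1" using card_Diff_subset[OF fX assms(5)] assms(1,2,6) by simp
  have cY': "card Y' = k" unfolding Y'_def using cNX b by simp
  have sNX0: "T = \<Sum>(?N - X) + s" unfolding s_def T_def
    by (rule sum.subset_diff[OF assms(5)]) simp
  then have sNX: "\<Sum>(?N - X) + s = T" by simp
  have sY: "\<Sum>Y' + b = \<Sum>(?N - X)" unfolding Y'_def using b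
    by (simp add: sum.remove[of "?N - X" b "\<lambda>x. x"])
  have Tj: "T mod 3 = j" using assms(4) T_def by simp
  have m1: "\<Sum>X' mod 3 = i" using mod3_m1[OF sX' a(3)[unfolded ra_def] ij(1)] .
  have e2: "\<Sum>Y' + b + s = T" using sY sNX by simp
  have m2: "\<Sum>Y' mod 3 = i" using mod3_m2[OF e2 Tj b(3)[unfolded rb_def] ij] .
  have X'R: "X' \<in> R ?N k i" 
  proof -
    have "X' \<subseteq> ?N" unfolding X'_def using a(1) assms(5) by blast
    then show ?thesis unfolding R_def using cX' m1 by blast
  qed
  have Y'R: "Y' \<in> R ?N k i" 
  proof -
    have "Y' \<subseteq> ?N" unfolding Y'_def by blast
    then show ?thesis unfolding R_def using cY' m2 by blast
  qed
  have XX: "X = X' - Y'" unfolding X'_def Y'_def using a(1) a(2) ab by blast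
  show "X \<in> D (R ?N k i) \<and> (\<exists>X' Y'. X' \<in> R ?N k i \<and> Y' \<in> R ?N k i \<and> X = X' - Y')"
  proof
    show "X \<in> D (R ?N k i)" unfolding D_def
      by (rule CollectI, rule exI[of _ X'], rule exI[of _ Y']) (use X'R Y'R XX in blast)
    show "\<exists>X' Y'. X' \<in> R ?N k i \<and> Y' \<in> R ?N k i \<and> X = X' - Y'"
      by (rule exI[of _ X'], rule exI[of _ Y']) (use X'R Y'R XX in blast)
  qed
qed

end
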